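(* Let $(F_{\mathfrak A},\phi_{\mathfrak A,\mathfrak B})$ be an $S_n$-equivariant strict system of sheaves on $X^n$. Then $d_{n,k-1}\circ d_{n,k}=0$ for all $k$.
   Context: $X$ is a complex quasi-projective scheme with a torus $\mathbb T$-action; "sheaf" means $\mathbb T$-equivariant, cohomologically $\mathbb Z/2$-graded coherent sheaf. $[n]=\{1,\dots,n\}$; subsets of $[n]$ carry the binary total order ($A\le B$ iff $\sum_{i\in A}2^i\le\sum_{i\in B}2^i$). Strict system: set partitions of $[n]$ are ordered by refinement; for a set partition $\mathfrak D$, $(X^n)_{\mathfrak D}=\{(x_i):x_i=x_j\iff i,j\text{ in the same block of }\mathfrak D\}$; $\mathfrak A\cap\mathfrak B$ is the partition into nonempty intersections of blocks; $U_{\mathfrak A,\mathfrak B}=\bigcup\{(X^n)_{\mathfrak D}:\mathfrak A\cap\mathfrak D=\mathfrak B\cap\mathfrak D\}$. The system consists of sheaves $F_{\mathfrak A}$ on $X^n$ and homomorphisms $\phi_{\mathfrak A,\mathfrak B}:F_{\mathfrak A}\to F_{\mathfrak B}$ for $\mathfrak A\le\mathfrak B$ with $\phi_{\mathfrak B,\mathfrak C}\phi_{\mathfrak A,\mathfrak B}=\phi_{\mathfrak A,\mathfrak C}$, $\phi_{\mathfrak A,\mathfrak A}=\mathrm{id}$, $\phi_{\mathfrak A,\mathfrak B}|_{U_{\mathfrak A,\mathfrak B}}$ an isomorphism, together with compatible $S_n$-equivariance isomorphisms $(\sigma_X^{-1})^*F_{\mathfrak A}\cong F_{\sigma^{-1}\mathfrak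 A}$. Index trees: an index tree of order $n$ is a rooted tree whose nodes are leaves or have at least two children, with subsets $L_v\subseteq[n]$ at the leaves forming a set partition of $[n]$; for non-leaf $v$, $L_v$ is the union of the labels of leaves below $v$; trees are identified with $L(T)=\{L_v\}$. $\mathfrak A(T)$ is the set of leaf labels, $P(T)$ the set of non-leaf labels, $F_T=F_{\mathfrak A(T)}$, $\mathcal T_{n,k}$ the set of index trees with $k$ non-leaf nodes, and $G_{n,k}=\bigoplus_{T\in\mathcal T_{n,k}}F_T$. Contractions: for a non-leaf, non-root node $v$, $O(T,v)$ deletes $v$ and attaches its children to its parent (labels unchanged). A node is exceptional if it is not a leaf and all its children are leaves; for exceptional $v$, $E(T,v)$ deletes all children of $v$. For a non-leaf node $v$, $s(v)=(-1)^l$ with $l$ the number of $L\in P(T)$ with $L<L_v$. Define $o(T,v)=s(v)\,\mathrm{id}:F_T\to F_{O(T,v)}$ (note $\mathfrak A(O(T,v))=\mathfrak A(T)$) and $e(T,v)=-s(v)\phi_{\mathfrak A(T),\mathfrak A(E(T,v))}:F_T\to F_{E(T,v)}$. The map $d_{n,k}:G_{n,k}\to G_{n,k-1}$ is the sum of all $o(T,v)$ (over $T\in\mathcal T_{n,k}$, $v$ non-leaf non-root) and all $e(T,v)$ (over $T\in\mathcal T_{n,k}$, $v$ exceptional). *)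

theory Defs
  imports Main
begin

definition set_partition :: "nat \<Rightarrow> nat set set \<Rightarrow> bool" where
  "set_partition n A \<longleftrightarrow> (\<forall>B\<in>A. B \<noteq> {} \<and> B \<subseteq> {1..n})
     \<and> (\<forall>B\<in>A. \<forall>C\<in>A. B \<noteq> C \<longrightarrow> B \<inter> C = {}) \<and> \<Union>A = {1..n}"

definition refines :: "nat set set \<Rightarrow> nat set set \<Rightarrow> bool" where
  "refines A B \<longleftrightarrow> (\<forall>a\<in>A. \<exists>b\<in>B. a \<subseteq> b)"

(* binary total order on subsets *)
definition bin :: "nat set \<Rightarrow> nat" where
  "bin S = (\<Sum>i\<in>S. 2 ^ i)"

(* An index tree is identified with its label set L(T). *)
definition leaves :: "nat set set \<Rightarrow> nat set set" where
  "leaves T = {S\<in>T. \<not> (\<exists>C\<in>T. C \<subset> S)}"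

definition nonleaves :: "nat set set \<Rightarrow> nat set set" where
  "nonleaves T = T - leaves T"

definition index_tree :: "nat \<Rightarrow> nat set set \<Rightarrow> bool" where
  "index_tree n T \<longleftrightarrow> T \<subseteq> Pow {1..n} \<and> {1..n} \<in> T \<and> (\<forall>S\<in>T. S \<noteq> {})
     \<and> (\<forall>S\<in>T. \<forall>S'\<in>T. S \<subseteq> S' \<or> S' \<subseteq> S \<or> S \<inter> S' = {})
     \<and> set_partition n (leaves T)"

(* \<T>_{n,k}; empty for negative k *)
definition trees :: "nat \<Rightarrow> int \<Rightarrow> nat set set set" where
  "trees n k = {T. index_tree n T \<and> int (card (nonleaves T)) = k}"

(* exponent l of s(v) = (-1)^l *)
definition sexp :: "nat set set \<Rightarrow> nat set \<Rightarrow> nat" where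
  "sexp T S = card {L\<in>nonleaves T. bin L < bin S}"

definition exceptional :: "nat set set \<Rightarrow> nat set \<Rightarrow> bool" where
  "exceptional T S \<longleftrightarrow> S \<in> nonleaves T \<and> (\<forall>C\<in>T. C \<subset> S \<longrightarrow> C \<in> leaves T)"

(* O(T,v): delete the node v, children reattached to parent *)
definition contrO :: "nat set set \<Rightarrow> nat set \<Rightarrow> nat set set" where
  "contrO T S = T - {S}"

(* E(T,v): delete all children of the exceptional node v *)
definition contrE :: "nat set set \<Rightarrow> nat set \<Rightarrow> nat set set" where
  "contrE T S = T - {C\<in>T. C \<subset> S}"

definition sgn_act :: "nat \<Rightarrow> 'a::ab_group_add \<Rightarrow> 'a" where
  "sgn_act l x = (if even l then x else - x)"

(* Elements of G_{n,k} = \<Oplus>_{T\<in>\<T>_{n,k}} F_T are tree-indexed families *)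
definition in_G :: "(nat set set \<Rightarrow> 'a::ab_group_add set) \<Rightarrow> nat \<Rightarrow> int
     \<Rightarrow> (nat set set \<Rightarrow> 'a) \<Rightarrow> bool" where
  "in_G F n k x \<longleftrightarrow> (\<forall>T. (T \<in> trees n k \<longrightarrow> x T \<in> F (leaves T)) \<and> (T \<notin> trees n k \<longrightarrow> x T = 0))"

definition dmap :: "(nat set set \<Rightarrow> nat set set \<Rightarrow> 'a \<Rightarrow> 'a) \<Rightarrow> nat \<Rightarrow> int
     \<Rightarrow> (nat set set \<Rightarrow> 'a::ab_group_add) \<Rightarrow> (nat set set \<Rightarrow> 'a)" where
  "dmap phi n k x = (\<lambda>T'. if T' \<in> trees n (k - 1) then
      (\<Sum>T\<in>trees n k. \<Sum>S\<in>nonleaves T - {{1..n}}.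
          if contrO T S = T' then sgn_act (sexp T S) (x T) else 0)
    + (\<Sum>T\<in>trees n k. \<Sum>S\<in>{S. exceptional T S}.
          if contrE T S = T' then - sgn_act (sexp T S) (phi (leaves T) (leaves (contrE T S)) (x T)) else 0)
    else 0)"

(* The algebraic part of a strict system: F_A subgroups of an ambient abelian group,
   \<phi>_{A,B} homomorphisms F_A \<rightarrow> F_B for A \<le> B, functorial. *)
definition strict_system_alg :: "nat \<Rightarrow> (nat set set \<Rightarrow> 'a::ab_group_add set)
     \<Rightarrow> (nat set set \<Rightarrow> nat set set \<Rightarrow> 'a \<Rightarrow> 'a) \<Rightarrow> bool" where
  "strict_system_alg n F phi \<longleftrightarrow>
     (\<forall>A. set_partition n A \<longrightarrow> 0 \<in> F A \<and> (\<forall>x\<in>F A. \<forall>y\<in>F A. x + y \<in> F A \<and> - x \<in> F A))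
   \<and> (\<forall>A B. set_partition n A \<and> set_partition n B \<and> refines A B \<longrightarrow>
        (\<forall>x\<in>F A. phi A B x \<in> F B) \<and> (\<forall>x\<in>F A. \<forall>y\<in>F A. phi A B (x + y) = phi A B x + phi A B y))
   \<and> (\<forall>A. set_partition n A \<longrightarrow> (\<forall>x\<in>F A. phi A A x = x))
   \<and> (\<forall>A B C. set_partition n A \<and> set_partition n B \<and> set_partition n C
        \<and> refines A B \<and> refines B C \<longrightarrow> (\<forall>x\<in>F A. phi B C (phi A B x) = phi A C x))"

end

theory Submission
  imports Defs
begin


lemma bit_bin: "finite S \<Longrightarrow> bit (bin S) i \<longleftrightarrow> i \<in> S"
proof (induction S arbitrary: i rule: finite_induct)
  case empty then show ?case by (simp add: bin_def)
next
  case (insert a S)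
  have "bin (insert a S) = 2 ^ a + bin S" using insert by (simp add: bin_def)
  moreover have "bit (2 ^ a + bin S) i \<longleftrightarrow> bit ((2::nat) ^ a) i \<or> bit (bin S) i"
    by (rule bit_disjunctive_add_iff) (use insert in \<open>auto simp: bit_exp_iff\<close>)
  ultimately show ?case using insert by (auto simp: bit_exp_iff)
qed

lemma bin_inj: "finite S \<Longrightarrow> finite S' \<Longrightarrow> bin S = bin S' \<Longrightarrow> S = S'"
  by (metis bit_bin subsetI subset_antisym)

lemma sum_invol_0:
  fixes f :: "'b \<Rightarrow> 'a::ab_group_add"
  assumes "finite X"
    and f_h: "\<And>x. x \<in> X \<Longrightarrow> f (h x) + f x = 0"
    and h: "\<And>x. x \<in> X \<Longrightarrow> h x \<in> X" "\<And>x. x \<in> X \<Longrightarrow> h (h x) = x" "\<And>x. x \<in> X \<Longrightarrow> h x \<noteq> x"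
  shows "sum f X = 0"
proof -
  have "\<forall>Z. Z \<subseteq> X \<and> card Z = m \<and> (\<forall>x\<in>Z. h x \<in> Z) \<longrightarrow> sum f Z = 0" for m
  proof (induction m rule: less_induct)
    case (less m)
    show ?case
    proof (intro allI impI)
      fix Z assume Z: "Z \<subseteq> X \<and> card Z = m \<and> (\<forall>x\<in>Z. h x \<in> Z)"
      have fZ: "finite Z" using Z assms(1) finite_subset by blast
      show "sum f Z = 0"
      proof (cases "Z = {}")
        case True then show ?thesis by simp
      next
        case False
        then obtain p where p: "p \<in> Z" by blast
        have pX: "p \<in> X" using p Z by blast
        define Y where "Y = Z - {p, h p}"
        have hp: "h p \<in> Z" "h p \<noteq> p" using Z p h(3)[OF pX] by auto
        have c: "card Y < m" unfolding Y_def using p fZ Z by (intro psubset_card_mono[THEN order.strict_trans2]) auto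
        have cl: "\<forall>x\<in>Y. h x \<in> Y"
        proof
          fix x assume x: "x \<in> Y"
          then have xX: "x \<in> X" "x \<in> Z" using Z Y_def by auto
          have "h x \<noteq> p" using h(2)[OF xX(1)] x Y_def by auto
          moreover have "h x \<noteq> h p" using h(2)[OF xX(1)] h(2)[OF pX] x Y_def by (metis Diff_iff insertCI)
          ultimately show "h x \<in> Y" using Z xX Y_def by auto
        qed
        have Y0: "sum f Y = 0" using less[rule_format, OF c, of Y] cl Z Y_def by blast
        have "Z = insert p (insert (h p) Y)" using p hp unfolding Y_def by auto
        moreover have "finite Y" "p \<notin> insert (h p) Y" "h p \<notin> Y" using fZ hp Y_def by auto
        ultimately have "sum f Z = f p + (f (h p) + sum f Y)"
          by (metis finite.insertI sum.insert)
        then show ?thesis using Y0 f_h[OF pX] by (simp add: add.commute)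
      qed
    qed
  qed
  then show ?thesis using h(1) by blast
qed



lemma it_finite: "index_tree n T \<Longrightarrow> finite T"
  unfolding index_tree_def by (meson finite_Pow_iff finite_atLeastAtMost finite_subset)

lemma nonleaves_iff: "S \<in> nonleaves T \<longleftrightarrow> S \<in> T \<and> (\<exists>C\<in>T. C \<subset> S)"
  by (auto simp: nonleaves_def leaves_def)

lemma leaves_iff: "S \<in> leaves T \<longleftrightarrow> S \<in> T \<and> \<not>(\<exists>C\<in>T. C \<subset> S)"
  by (auto simp: leaves_def)

lemma O_leaves: assumes "S \<in> nonleaves T" shows "leaves (T - {S}) = leaves T"
proof (rule set_eqI)
  fix D
  obtain C where C: "C \<in> T" "C \<subset> S" using assms by (auto simp: nonleaves_iff)
  show "D \<in> leaves (T - {S}) \<longleftrightarrow> D \<in> leaves T"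
  proof
    assume D: "D \<in> leaves (T - {S})"
    have "\<not> S \<subset> D"
    proof
      assume "S \<subset> D"
      then have "C \<subset> D" "C \<noteq> S" using C by auto
      then show False using D C by (auto simp: leaves_iff)
    qed
    then show "D \<in> leaves T" using D by (auto simp: leaves_iff)
  next
    assume "D \<in> leaves T"
    moreover have "D \<noteq> S" using assms calculation by (auto simp: leaves_iff nonleaves_iff)
    ultimately show "D \<in> leaves (T - {S})" by (auto simp: leaves_iff)
  qed
qed

lemma O_nonleaves: "S \<in> nonleaves T \<Longrightarrow> nonleaves (T - {S}) = nonleaves T - {S}"
  using O_leaves[of S T] by (auto simp: nonleaves_def)

lemma O_tree: "index_tree n T \<Longrightarrow> S \<in> nonleaves T \<Longrightarrow> S \<noteq> {1..n} \<Longrightarrow> index_tree n (T - {S})"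
  using O_leaves[of S T] unfolding index_tree_def by auto

lemma E_leaves:
  assumes it: "index_tree n T" and ex: "exceptional T S"
  shows "leaves (contrE T S) = (leaves T - {C. C \<subset> S}) \<union> {S}"
proof -
  have ST: "S \<in> T" and Snl: "S \<in> nonleaves T" and ch: "\<And>C. C \<in> T \<Longrightarrow> C \<subset> S \<Longrightarrow> C \<in> leaves T"
    using ex by (auto simp: exceptional_def nonleaves_def)
  have lam: "\<And>A B. A \<in> T \<Longrightarrow> B \<in> T \<Longrightarrow> A \<subseteq> B \<or> B \<subseteq> A \<or> A \<inter> B = {}"
    and ne: "\<And>A. A \<in> T \<Longrightarrow> A \<noteq> {}" using it by (auto simp: index_tree_def)
  show ?thesis
  proof (rule set_eqI)
    fix D
    show "D \<in> leaves (contrE T S) \<longleftrightarrow> D \<in> (leaves T - {C. C \<subset> S}) \<union> {S}"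
    proof (cases "D = S")
      case True then show ?thesis using ST Snl
        by (auto simp: leaves_iff contrE_def nonleaves_iff)
    next
      case False
      show ?thesis
      proof
        assume D: "D \<in> leaves (contrE T S)"
        then have DT: "D \<in> T" and nsub: "\<not> D \<subset> S" by (auto simp: leaves_iff contrE_def)
        have "\<not>(\<exists>C\<in>T. C \<subset> D)"
        proof
          assume "\<exists>C\<in>T. C \<subset> D"
          then obtain C where C: "C \<in> T" "C \<subset> D" by blast
          show False
          proof (cases "C \<subset> S")
            case True
            then have "D \<inter> S \<noteq> {}" using C ne[OF C(1)] by blast
            then have "S \<subset> D" using lam[OF DT ST] nsub False by blast
            then show False using D ST by (auto simp: leaves_iff contrE_def)
          next
            case False
            then show False using C D by (auto simp: leaves_iff contrE_def)
          qed
        qed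
        then show "D \<in> (leaves T - {C. C \<subset> S}) \<union> {S}" using DT nsub by (auto simp: leaves_iff)
      next
        assume "D \<in> (leaves T - {C. C \<subset> S}) \<union> {S}"
        then show "D \<in> leaves (contrE T S)" using False by (auto simp: leaves_iff contrE_def)
      qed
    qed
  qed
qed

lemma E_nonleaves:
  assumes it: "index_tree n T" and ex: "exceptional T S"
  shows "nonleaves (contrE T S) = nonleaves T - {S}"
proof -
  have ch: "\<And>C. C \<in> T \<Longrightarrow> C \<subset> S \<Longrightarrow> C \<in> leaves T" and "S \<in> T"
    using ex by (auto simp: exceptional_def nonleaves_def)
  have L: "leaves (contrE T S) = (leaves T - {C. C \<subset> S}) \<union> {S}" by (rule E_leaves[OF assms])
  have "contrE T S = T - {C. C \<subset> S}" by (auto simp: contrE_def)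
  then show ?thesis unfolding nonleaves_def L using ch by blast
qed

lemma E_tree:
  assumes it: "index_tree n T" and ex: "exceptional T S"
  shows "index_tree n (contrE T S)"
proof -
  have ST: "S \<in> T" and Snl: "S \<in> nonleaves T"
    using ex by (auto simp: exceptional_def nonleaves_def)
  have lam: "\<And>A B. A \<in> T \<Longrightarrow> B \<in> T \<Longrightarrow> A \<subseteq> B \<or> B \<subseteq> A \<or> A \<inter> B = {}"
    and ne: "\<And>A. A \<in> T \<Longrightarrow> A \<noteq> {}" and sub: "T \<subseteq> Pow {1..n}" and root: "{1..n} \<in> T"
    and sp: "set_partition n (leaves T)" using it by (auto simp: index_tree_def)
  have L: "leaves (contrE T S) = (leaves T - {C. C \<subset> S}) \<union> {S}" by (rule E_leaves[OF assms])
  have Ssub: "S \<subseteq> {1..n}" using sub ST by auto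
  have "set_partition n (leaves (contrE T S))"
    unfolding set_partition_def L
  proof (intro conjI ballI impI)
    fix B assume B: "B \<in> leaves T - {C. C \<subset> S} \<union> {S}"
    then have "B \<in> T" using ST by (auto simp: leaves_def)
    then show "B \<noteq> {}" "B \<subseteq> {1..n}" using ne sub by auto
  next
    fix B C assume B: "B \<in> leaves T - {C. C \<subset> S} \<union> {S}" and C: "C \<in> leaves T - {C. C \<subset> S} \<union> {S}"
      and BC: "B \<noteq> C"
    have disj: "L \<inter> S = {}" if "L \<in> leaves T" "\<not> L \<subset> S" for L
    proof -
      have "L \<noteq> S" using that Snl by (auto simp: nonleaves_def)
      moreover have "\<not> S \<subset> L" using that ST by (auto simp: leaves_iff)
      ultimately show ?thesis using lam[of L S] that ST by (auto simp: leaves_iff)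
    qed
    show "B \<inter> C = {}"
    proof (cases "B = S \<or> C = S")
      case True
      show ?thesis
      proof (cases "B = S")
        case True
        then have "C \<in> leaves T" "\<not> C \<subset> S" using C BC by auto
        then show ?thesis using disj True by auto
      next
        case False
        then have "C = S" "B \<in> leaves T" "\<not> B \<subset> S" using B \<open>B = S \<or> C = S\<close> by auto
        then show ?thesis using disj by auto
      qed
    next
      case False
      then have "B \<in> leaves T" "C \<in> leaves T" using B C by auto
      then show ?thesis using sp BC unfolding set_partition_def by blast
    qed
  next
    have "\<Union>(leaves T) = {1..n}" using sp by (simp add: set_partition_def)
    moreover have "\<Union>(leaves T) \<subseteq> \<Union>(leaves T - {C. C \<subset> S} \<union> {S})"
    proof
      fix x assume "x \<in> \<Union>(leaves T)"
      then obtain L where L: "L \<in> leaves T" "x \<in> L" by blast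
      show "x \<in> \<Union>(leaves T - {C. C \<subset> S} \<union> {S})"
      proof (cases "L \<subset> S")
        case True then show ?thesis using L by blast
      next
        case False then show ?thesis using L by blast
      qed
    qed
    moreover have "\<Union>(leaves T - {C. C \<subset> S} \<union> {S}) \<subseteq> \<Union>(leaves T) \<union> S" by blast
    ultimately show "\<Union>(leaves T - {C. C \<subset> S} \<union> {S}) = {1..n}" using Ssub by blast
  qed
  moreover have "{1..n} \<in> contrE T S" using root Ssub by (auto simp: contrE_def)
  moreover have "contrE T S \<subseteq> T" by (auto simp: contrE_def)
  ultimately show ?thesis unfolding index_tree_def
  proof (intro conjI)
    show "contrE T S \<subseteq> Pow {1..n}" using sub \<open>contrE T S \<subseteq> T\<close> by blast
    show "\<forall>S\<in>contrE T S. S \<noteq> {}" using ne \<open>contrE T S \<subseteq> T\<close> by blast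
    show "\<forall>Sa\<in>contrE T S. \<forall>S'\<in>contrE T S. Sa \<subseteq> S' \<or> S' \<subseteq> Sa \<or> Sa \<inter> S' = {}"
      using lam \<open>contrE T S \<subseteq> T\<close> by (meson subsetD)
  qed auto
qed

lemma E_refines:
  assumes it: "index_tree n T" and ex: "exceptional T S"
  shows "refines (leaves T) (leaves (contrE T S))"
  unfolding refines_def E_leaves[OF assms] by blast



definition valid :: "nat \<Rightarrow> nat set set \<Rightarrow> bool \<times> nat set \<Rightarrow> bool" where
  "valid n T \<sigma> \<longleftrightarrow> (if fst \<sigma> then snd \<sigma> \<in> nonleaves T \<and> snd \<sigma> \<noteq> {1..n} else exceptional T (snd \<sigma>))"

definition tgt :: "nat set set \<Rightarrow> bool \<times> nat set \<Rightarrow> nat set set" where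
  "tgt T \<sigma> = (if fst \<sigma> then contrO T (snd \<sigma>) else contrE T (snd \<sigma>))"

definition eps :: "nat set set \<Rightarrow> bool \<times> nat set \<Rightarrow> nat" where
  "eps T \<sigma> = sexp T (snd \<sigma>) + (if fst \<sigma> then 0 else 1)"

definition steps :: "nat \<Rightarrow> nat set set \<Rightarrow> (bool \<times> nat set) set" where
  "steps n T = {\<sigma>. valid n T \<sigma>}"

lemma valid_nl: "valid n T \<sigma> \<Longrightarrow> snd \<sigma> \<in> nonleaves T"
  by (auto simp: valid_def exceptional_def split: if_splits)

lemma valid_tgt:
  assumes it: "index_tree n T" and v: "valid n T \<sigma>"
  shows "index_tree n (tgt T \<sigma>) \<and> nonleaves (tgt T \<sigma>) = nonleaves T - {snd \<sigma>}
    \<and> refines (leaves T) (leaves (tgt T \<sigma>))"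
proof -
  obtain b S where s: "\<sigma> = (b, S)" by force
  show ?thesis
  proof (cases b)
    case True
    then have "S \<in> nonleaves T" "S \<noteq> {1..n}" using v s by (auto simp: valid_def)
    then show ?thesis
      using True s O_tree[OF it] O_nonleaves O_leaves
      by (auto simp: tgt_def contrO_def refines_def)
  next
    case False
    then have "exceptional T S" using v s by (auto simp: valid_def)
    then show ?thesis
      using False s E_tree[OF it] E_nonleaves[OF it] E_refines[OF it]
      by (auto simp: tgt_def)
  qed
qed

lemma valid_tgt1: "index_tree n T \<Longrightarrow> valid n T \<sigma> \<Longrightarrow> index_tree n (tgt T \<sigma>)"
  using valid_tgt by blast
lemma valid_tgt2: "index_tree n T \<Longrightarrow> valid n T \<sigma> \<Longrightarrow> nonleaves (tgt T \<sigma>) = nonleaves T - {snd \<sigma>}"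
  using valid_tgt by blast
lemma valid_tgt3: "index_tree n T \<Longrightarrow> valid n T \<sigma> \<Longrightarrow> refines (leaves T) (leaves (tgt T \<sigma>))"
  using valid_tgt by blast

lemma O_leaves_tgt: "valid n T (True, S) \<Longrightarrow> leaves (tgt T (True, S)) = leaves T"
  by (simp add: valid_def tgt_def contrO_def O_leaves)

lemma nonleaves_finite: "index_tree n T \<Longrightarrow> finite (nonleaves T)"
  using it_finite by (auto simp: nonleaves_def)

lemma tgt_trees:
  assumes T: "T \<in> trees n k" and v: "valid n T \<sigma>"
  shows "tgt T \<sigma> \<in> trees n (k - 1)"
proof -
  have it: "index_tree n T" and c: "int (card (nonleaves T)) = k" using T by (auto simp: trees_def)
  have "card (nonleaves (tgt T \<sigma>)) = card (nonleaves T) - 1"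
    using valid_tgt2[OF it v] valid_nl[OF v] nonleaves_finite[OF it] by simp
  moreover have "card (nonleaves T) \<ge> 1"
    using valid_nl[OF v] nonleaves_finite[OF it] by (metis One_nat_def Suc_leI card_gt_0_iff empty_iff)
  ultimately show ?thesis using valid_tgt1[OF it v] c by (auto simp: trees_def)
qed

lemma steps_finite: "index_tree n T \<Longrightarrow> finite (steps n T)"
proof -
  assume it: "index_tree n T"
  have "steps n T \<subseteq> UNIV \<times> nonleaves T" using valid_nl by (force simp: steps_def)
  then show ?thesis using nonleaves_finite[OF it] by (metis finite_SigmaI finite_UNIV finite_subset)
qed

lemma sexp_diff:
  assumes "nonleaves T' = nonleaves T - {R}" "R \<in> nonleaves T" "finite (nonleaves T)"
  shows "sexp T S = sexp T' S + (if bin R < bin S then 1 else 0)"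
proof -
  have "{L \<in> nonleaves T'. bin L < bin S} = {L \<in> nonleaves T. bin L < bin S} - {R}"
    using assms(1) by auto
  moreover have "finite {L \<in> nonleaves T. bin L < bin S}" using assms(3) by simp
  ultimately show ?thesis
  proof (cases "bin R < bin S")
    case True
    then have "R \<in> {L \<in> nonleaves T. bin L < bin S}" using assms(2) by simp
    then show ?thesis unfolding sexp_def \<open>{L \<in> nonleaves T'. bin L < bin S} = {L \<in> nonleaves T. bin L < bin S} - {R}\<close>
      using True \<open>finite {L \<in> nonleaves T. bin L < bin S}\<close>
      using card.remove[of "{L \<in> nonleaves T. bin L < bin S}" R] by simp
  next
    case False
    then have "{L \<in> nonleaves T. bin L < bin S} - {R} = {L \<in> nonleaves T. bin L < bin S}" by auto
    then show ?thesis unfolding sexp_def \<open>{L \<in> nonleaves T'. bin L < bin S} = {L \<in> nonleaves T. bin L < bin S} - {R}\<close>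
      using False by simp
  qed
qed

lemma sexp_cong: "nonleaves T = nonleaves T' \<Longrightarrow> sexp T S = sexp T' S"
  by (simp add: sexp_def)



fun iv :: "(bool \<times> nat set) \<times> (bool \<times> nat set) \<Rightarrow> (bool \<times> nat set) \<times> (bool \<times> nat set)" where
  "iv ((b1,S1),(b2,S2)) = (if \<not> b2 \<and> S1 \<subset> S2 then ((\<not> b1, S1),(b2,S2)) else ((b2,S2),(b1,S1)))"

definition VP :: "nat \<Rightarrow> nat set set \<Rightarrow> (bool \<times> nat set) \<times> (bool \<times> nat set) \<Rightarrow> bool" where
  "VP n T p \<longleftrightarrow> valid n T (fst p) \<and> valid n (tgt T (fst p)) (snd p)"

definition tgt2 where "tgt2 T p = tgt (tgt T (fst p)) (snd p)"
definition E2 where "E2 T p = eps (tgt T (fst p)) (snd p) + eps T (fst p)"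

lemma tgtO: "tgt T (True, S) = T - {S}" by (simp add: tgt_def contrO_def)
lemma tgtE: "tgt T (False, S) = T - {C. C \<subset> S}" by (auto simp: tgt_def contrE_def)

lemma validO: "valid n T (True, S) \<longleftrightarrow> S \<in> nonleaves T \<and> S \<noteq> {1..n}" by (simp add: valid_def)
lemma validE: "valid n T (False, S) \<longleftrightarrow> S \<in> nonleaves T \<and> (\<forall>C\<in>T. C \<subset> S \<longrightarrow> C \<in> leaves T)"
  by (simp add: valid_def exceptional_def)

lemma leavesO: "S \<in> nonleaves T \<Longrightarrow> leaves (T - {S}) = leaves T" by (rule O_leaves)
lemma leavesE: "index_tree n T \<Longrightarrow> valid n T (False, S) \<Longrightarrow> leaves (T - {C. C \<subset> S}) = (leaves T - {C. C \<subset> S}) \<union> {S}"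
  using E_leaves[of n T S] by (simp add: valid_def tgtE[symmetric] tgt_def)

lemma nl_sub: "nonleaves T \<subseteq> T" by (auto simp: nonleaves_def)

lemma flip:
  assumes it: "index_tree n T" and vp: "VP n T ((b1,S1),(False,S2))" and sub: "S1 \<subset> S2"
  shows "VP n T ((\<not> b1,S1),(False,S2)) \<and> tgt2 T ((\<not> b1,S1),(False,S2)) = tgt2 T ((b1,S1),(False,S2))
     \<and> odd (E2 T ((\<not> b1,S1),(False,S2)) + E2 T ((b1,S1),(False,S2)))"
proof -
  have v1: "valid n T (b1,S1)" and v2: "valid n (tgt T (b1,S1)) (False,S2)" using vp by (auto simp: VP_def)
  have S1nl: "S1 \<in> nonleaves T" using valid_nl[OF v1] by simp
  have nl1: "nonleaves (tgt T (b1,S1)) = nonleaves T - {S1}" using valid_tgt2[OF it v1] by simp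
  have S2T: "S2 \<in> T" using valid_nl[OF v2] nl1 nl_sub by auto
  have Tsub: "T \<subseteq> Pow {1..n}" using it by (simp add: index_tree_def)
  have v1': "valid n T (\<not> b1, S1)"
  proof (cases b1)
    case True
    then have ex2: "\<forall>C\<in>T - {S1}. C \<subset> S2 \<longrightarrow> C \<in> leaves (T - {S1})" using v2 by (simp add: validE tgtO)
    have "\<forall>C\<in>T. C \<subset> S1 \<longrightarrow> C \<in> leaves T"
      using ex2 leavesO[OF S1nl] sub by auto
    then show ?thesis using True S1nl by (simp add: validE)
  next
    case False
    have "S1 \<noteq> {1..n}" using sub S2T Tsub by auto
    then show ?thesis using False S1nl by (simp add: validO)
  qed
  have nl1': "nonleaves (tgt T (\<not> b1,S1)) = nonleaves T - {S1}" using valid_tgt2[OF it v1'] by simp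
  have v2': "valid n (tgt T (\<not> b1,S1)) (False,S2)"
  proof (cases b1)
    case True
    have ex2: "\<forall>C\<in>T - {S1}. C \<subset> S2 \<longrightarrow> C \<in> leaves (T - {S1})" using v2 True by (simp add: validE tgtO)
    have L: "leaves (T - {C. C \<subset> S1}) = (leaves T - {C. C \<subset> S1}) \<union> {S1}"
      using leavesE[OF it] v1' True by simp
    have "\<forall>C\<in>T - {C. C \<subset> S1}. C \<subset> S2 \<longrightarrow> C \<in> leaves (T - {C. C \<subset> S1})"
      unfolding L using ex2 leavesO[OF S1nl] by auto
    then show ?thesis using True nl1' valid_nl[OF v2] nl1 by (simp add: validE tgtE)
  next
    case False
    have ex1: "\<forall>C\<in>T. C \<subset> S1 \<longrightarrow> C \<in> leaves T" using v1 False by (simp add: validE)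
    have ex2: "\<forall>C\<in>T - {C. C \<subset> S1}. C \<subset> S2 \<longrightarrow> C \<in> leaves (T - {C. C \<subset> S1})"
      using v2 False by (simp add: validE tgtE)
    have L: "leaves (T - {C. C \<subset> S1}) = (leaves T - {C. C \<subset> S1}) \<union> {S1}"
      using leavesE[OF it] v1 False by simp
    have "\<forall>C\<in>T - {S1}. C \<subset> S2 \<longrightarrow> C \<in> leaves (T - {S1})"
      unfolding leavesO[OF S1nl] using ex1 ex2 unfolding L by blast
    then show ?thesis using False nl1' valid_nl[OF v2] nl1 by (simp add: validE tgtO)
  qed
  have t: "tgt2 T ((\<not> b1,S1),(False,S2)) = tgt2 T ((b1,S1),(False,S2))"
    using sub by (cases b1) (auto simp: tgt2_def tgtO tgtE)
  have "sexp (tgt T (\<not> b1,S1)) S2 = sexp (tgt T (b1,S1)) S2" using nl1 nl1' by (simp add: sexp_cong)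
  then have "odd (E2 T ((\<not> b1,S1),(False,S2)) + E2 T ((b1,S1),(False,S2)))"
    by (simp add: E2_def eps_def)
  then show ?thesis using v1' v2' t by (simp add: VP_def)
qed

lemma swap:
  assumes it: "index_tree n T" and vp: "VP n T ((b1,S1),(b2,S2))" and ns12: "\<not> (\<not> b2 \<and> S1 \<subset> S2)"
  shows "VP n T ((b2,S2),(b1,S1)) \<and> \<not> (\<not> b1 \<and> S2 \<subset> S1) \<and> S1 \<noteq> S2
     \<and> tgt2 T ((b2,S2),(b1,S1)) = tgt2 T ((b1,S1),(b2,S2))
     \<and> odd (E2 T ((b2,S2),(b1,S1)) + E2 T ((b1,S1),(b2,S2)))"
proof -
  have v1: "valid n T (b1,S1)" and v2: "valid n (tgt T (b1,S1)) (b2,S2)" using vp by (auto simp: VP_def)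
  have S1nl: "S1 \<in> nonleaves T" using valid_nl[OF v1] by simp
  have nl1: "nonleaves (tgt T (b1,S1)) = nonleaves T - {S1}" using valid_tgt2[OF it v1] by simp
  have S2nl1: "S2 \<in> nonleaves (tgt T (b1,S1))" using valid_nl[OF v2] by simp
  then have S2nl: "S2 \<in> nonleaves T" and ne: "S1 \<noteq> S2" using nl1 by auto
  have S2T1: "S2 \<in> tgt T (b1,S1)" using S2nl1 nl_sub by auto
  have ns21: "\<not> (\<not> b1 \<and> S2 \<subset> S1)" using S2T1 by (cases b1) (auto simp: tgtE)
  have v2': "valid n T (b2,S2)"
  proof (cases b2)
    case True then show ?thesis using v2 S2nl by (simp add: validO)
  next
    case False
    have ex2: "\<forall>C\<in>tgt T (b1,S1). C \<subset> S2 \<longrightarrow> C \<in> leaves (tgt T (b1,S1))" using v2 False by (simp add: validE)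
    have "\<forall>C\<in>T. C \<subset> S2 \<longrightarrow> C \<in> leaves T"
    proof (cases b1)
      case True
      then show ?thesis using ex2 ns12 False leavesO[OF S1nl] by (auto simp: tgtO)
    next
      case b1: False
      have ex1: "\<forall>C\<in>T. C \<subset> S1 \<longrightarrow> C \<in> leaves T" using v1 b1 by (simp add: validE)
      have L: "leaves (T - {C. C \<subset> S1}) = (leaves T - {C. C \<subset> S1}) \<union> {S1}"
        using leavesE[OF it] v1 b1 by simp
      have ex2': "\<And>C. C \<in> T \<Longrightarrow> \<not> C \<subset> S1 \<Longrightarrow> C \<subset> S2 \<Longrightarrow> C \<in> (leaves T - {C. C \<subset> S1}) \<union> {S1}"
      proof -
        have "\<forall>C\<in>T - {C. C \<subset> S1}. C \<subset> S2 \<longrightarrow> C \<in> leaves (T - {C. C \<subset> S1})"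
          using ex2 b1 by (simp add: tgtE)
        then show "\<And>C. C \<in> T \<Longrightarrow> \<not> C \<subset> S1 \<Longrightarrow> C \<subset> S2 \<Longrightarrow> C \<in> (leaves T - {C. C \<subset> S1}) \<union> {S1}"
          unfolding L by blast
      qed
      show ?thesis
      proof (intro ballI impI)
        fix C assume C: "C \<in> T" "C \<subset> S2"
        show "C \<in> leaves T"
        proof (cases "C \<subset> S1")
          case True then show ?thesis using ex1 C by simp
        next
          case nc: False
          have "C \<noteq> S1" using C ns12 False by auto
          then show ?thesis using ex2'[OF C(1) nc C(2)] by simp
        qed
      qed
    qed
    then show ?thesis using False S2nl by (simp add: validE)
  qed
  have nl2: "nonleaves (tgt T (b2,S2)) = nonleaves T - {S2}" using valid_tgt2[OF it v2'] by simp
  have S1nl2: "S1 \<in> nonleaves (tgt T (b2,S2))" using nl2 S1nl ne by auto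
  have v1': "valid n (tgt T (b2,S2)) (b1,S1)"
  proof (cases b1)
    case True then show ?thesis using v1 S1nl2 by (simp add: validO)
  next
    case False
    have ex1: "\<forall>C\<in>T. C \<subset> S1 \<longrightarrow> C \<in> leaves T" using v1 False by (simp add: validE)
    have "\<forall>C\<in>tgt T (b2,S2). C \<subset> S1 \<longrightarrow> C \<in> leaves (tgt T (b2,S2))"
    proof (cases b2)
      case True
      then show ?thesis using ex1 leavesO[OF S2nl] by (auto simp: tgtO)
    next
      case b2: False
      have L: "leaves (T - {C. C \<subset> S2}) = (leaves T - {C. C \<subset> S2}) \<union> {S2}"
        using leavesE[OF it] v2' b2 by simp
      have "\<forall>C\<in>T - {C. C \<subset> S2}. C \<subset> S1 \<longrightarrow> C \<in> leaves (T - {C. C \<subset> S2})"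
        unfolding L using ex1 by simp
      then show ?thesis using b2 by (simp add: tgtE)
    qed
    then show ?thesis using False S1nl2 by (simp add: validE)
  qed
  have t: "tgt2 T ((b2,S2),(b1,S1)) = tgt2 T ((b1,S1),(b2,S2))"
  proof (cases b1; cases b2)
    assume "b1" "b2" then show ?thesis by (auto simp: tgt2_def tgtO tgtE)
  next
    assume "b1" "\<not> b2" then show ?thesis using ns12 unfolding tgt2_def by (simp add: tgtO tgtE) blast
  next
    assume "\<not> b1" "b2" then show ?thesis using ns21 unfolding tgt2_def by (simp add: tgtO tgtE) blast
  next
    assume "\<not> b1" "\<not> b2" then show ?thesis unfolding tgt2_def by (simp add: tgtO tgtE) blast
  qed
  have fin: "finite (nonleaves T)" using nonleaves_finite[OF it] .
  have e1: "sexp T S2 = sexp (tgt T (b1,S1)) S2 + (if bin S1 < bin S2 then 1 else 0)"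
    by (rule sexp_diff[OF nl1 S1nl fin])
  have e2: "sexp T S1 = sexp (tgt T (b2,S2)) S1 + (if bin S2 < bin S1 then 1 else 0)"
    by (rule sexp_diff[OF nl2 S2nl fin])
  have "T \<subseteq> Pow {1..n}" using it by (simp add: index_tree_def)
  then have "S1 \<subseteq> {1..n}" "S2 \<subseteq> {1..n}" using S1nl S2nl nl_sub by blast+
  then have "finite S1" "finite S2" using finite_subset by blast+
  then have "bin S1 \<noteq> bin S2" using bin_inj ne by blast
  then have "odd (E2 T ((b2,S2),(b1,S1)) + E2 T ((b1,S1),(b2,S2)))"
  proof -
    have "E2 T ((b2,S2),(b1,S1)) + E2 T ((b1,S1),(b2,S2)) =
      2 * (sexp (tgt T (b1,S1)) S2 + sexp (tgt T (b2,S2)) S1 + (if b1 then 0 else 1) + (if b2 then 0 else 1))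
      + (if bin S1 < bin S2 then 1 else 0) + (if bin S2 < bin S1 then 1 else 0)"
      unfolding E2_def eps_def using e1 e2 by simp
    moreover have "(if bin S1 < bin S2 then 1 else 0) + (if bin S2 < bin S1 then 1 else 0) = (1::nat)"
      using \<open>bin S1 \<noteq> bin S2\<close> by auto
    ultimately show ?thesis using \<open>bin S1 \<noteq> bin S2\<close> by (auto split: if_splits)
  qed
  then show ?thesis using v2' v1' t ne ns21 by (simp add: VP_def)
qed



lemma invol:
  assumes it: "index_tree n T" and vp: "VP n T p"
  shows "VP n T (iv p) \<and> iv (iv p) = p \<and> iv p \<noteq> p \<and> tgt2 T (iv p) = tgt2 T p
    \<and> odd (E2 T (iv p) + E2 T p)"
proof -
  obtain b1 S1 b2 S2 where p: "p = ((b1,S1),(b2,S2))" by (metis prod.collapse)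
  show ?thesis
  proof (cases "\<not> b2 \<and> S1 \<subset> S2")
    case True
    then have "iv p = ((\<not> b1,S1),(False,S2))" "iv (iv p) = p" using p by auto
    then show ?thesis using flip[OF it, of b1 S1 S2] vp p True by auto
  next
    case False
    then have i: "iv p = ((b2,S2),(b1,S1))" using p by auto
    have s: "VP n T ((b2,S2),(b1,S1)) \<and> \<not> (\<not> b1 \<and> S2 \<subset> S1) \<and> S1 \<noteq> S2
     \<and> tgt2 T ((b2,S2),(b1,S1)) = tgt2 T ((b1,S1),(b2,S2))
     \<and> odd (E2 T ((b2,S2),(b1,S1)) + E2 T ((b1,S1),(b2,S2)))"
      using swap[OF it, of b1 S1 b2 S2] vp p False by auto
    then have "iv (iv p) = p" using i p by simp
    then show ?thesis using s i p by auto
  qed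
qed

definition coef :: "(nat set set \<Rightarrow> nat set set \<Rightarrow> 'a \<Rightarrow> 'a) \<Rightarrow> nat set set \<Rightarrow> bool \<times> nat set \<Rightarrow> 'a::ab_group_add \<Rightarrow> 'a" where
  "coef phi T \<sigma> y = sgn_act (eps T \<sigma>) (phi (leaves T) (leaves (tgt T \<sigma>)) y)"

lemma sgn_act_neg: "sgn_act l (- y) = - sgn_act l y" by (simp add: sgn_act_def)
lemma sgn_act_add: "sgn_act l (a + b) = sgn_act l a + sgn_act l b" by (simp add: sgn_act_def)
lemma sgn_act_sgn: "sgn_act l (sgn_act m y) = sgn_act (l + m) y" by (simp add: sgn_act_def)
lemma sgn_act_zero: "sgn_act l 0 = 0" by (simp add: sgn_act_def)
lemma sgn_act_odd: "odd (a + b) \<Longrightarrow> sgn_act a z + sgn_act b z = 0" by (auto simp: sgn_act_def)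

context
  fixes n :: nat and F :: "nat set set \<Rightarrow> 'a::ab_group_add set" and phi
  assumes SS: "strict_system_alg n F phi"
begin

lemma F0: "set_partition n A \<Longrightarrow> 0 \<in> F A" using SS by (simp add: strict_system_alg_def)
lemma Fadd: "set_partition n A \<Longrightarrow> x \<in> F A \<Longrightarrow> y \<in> F A \<Longrightarrow> x + y \<in> F A"
  using SS by (simp add: strict_system_alg_def)
lemma Fneg: "set_partition n A \<Longrightarrow> x \<in> F A \<Longrightarrow> - x \<in> F A"
  using SS by (simp add: strict_system_alg_def)
lemma phi_in: "set_partition n A \<Longrightarrow> set_partition n B \<Longrightarrow> refines A B \<Longrightarrow> x \<in> F A \<Longrightarrow> phi A B x \<in> F B"
  using SS by (simp add: strict_system_alg_def)
lemma phi_add: "set_partition n A \<Longrightarrow> set_partition n B \<Longrightarrow> refines A B \<Longrightarrow> x \<in> F A \<Longrightarrow> y \<in> F A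
   \<Longrightarrow> phi A B (x + y) = phi A B x + phi A B y"
  using SS by (simp add: strict_system_alg_def)
lemma phi_id: "set_partition n A \<Longrightarrow> x \<in> F A \<Longrightarrow> phi A A x = x"
  using SS by (simp add: strict_system_alg_def)
lemma phi_comp: "set_partition n A \<Longrightarrow> set_partition n B \<Longrightarrow> set_partition n C \<Longrightarrow> refines A B
   \<Longrightarrow> refines B C \<Longrightarrow> x \<in> F A \<Longrightarrow> phi B C (phi A B x) = phi A C x"
  using SS unfolding strict_system_alg_def by blast

lemma phi_zero: assumes "set_partition n A" "set_partition n B" "refines A B" shows "phi A B 0 = 0"
proof -
  have "phi A B (0 + 0) = phi A B 0 + phi A B 0" using phi_add[OF assms] F0[OF assms(1)] by blast
  then show ?thesis by simp
qed

lemma phi_neg: assumes "set_partition n A" "set_partition n B" "refines A B" "x \<in> F A"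
  shows "phi A B (- x) = - phi A B x"
proof -
  have "phi A B (x + - x) = phi A B x + phi A B (- x)" using phi_add[OF assms(1-4)] Fneg[OF assms(1,4)] by blast
  then show ?thesis using phi_zero[OF assms(1-3)] by (simp add: eq_neg_iff_add_eq_0 add.commute)
qed

lemma phi_sgn: assumes "set_partition n A" "set_partition n B" "refines A B" "x \<in> F A"
  shows "phi A B (sgn_act l x) = sgn_act l (phi A B x)"
  using phi_neg[OF assms] by (simp add: sgn_act_def)

lemma sgn_in: "set_partition n A \<Longrightarrow> x \<in> F A \<Longrightarrow> sgn_act l x \<in> F A"
  using Fneg by (simp add: sgn_act_def)

lemma sp_leaves: "index_tree n T \<Longrightarrow> set_partition n (leaves T)" by (simp add: index_tree_def)

lemma coef_in: assumes "index_tree n T" "valid n T \<sigma>" "y \<in> F (leaves T)"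
  shows "coef phi T \<sigma> y \<in> F (leaves (tgt T \<sigma>))"
  unfolding coef_def
  using sgn_in phi_in sp_leaves valid_tgt1 valid_tgt3 assms by metis

lemma coef_add: assumes "index_tree n T" "valid n T \<sigma>" "y \<in> F (leaves T)" "z \<in> F (leaves T)"
  shows "coef phi T \<sigma> (y + z) = coef phi T \<sigma> y + coef phi T \<sigma> z"
  unfolding coef_def
  using phi_add[OF sp_leaves[OF assms(1)] sp_leaves[OF valid_tgt1[OF assms(1,2)]] valid_tgt3[OF assms(1,2)] assms(3,4)]
  by (simp add: sgn_act_add)

lemma coef_zero: assumes "index_tree n T" "valid n T \<sigma>"
  shows "coef phi T \<sigma> 0 = 0"
  unfolding coef_def
  using phi_zero[OF sp_leaves[OF assms(1)] sp_leaves[OF valid_tgt1[OF assms(1,2)]] valid_tgt3[OF assms(1,2)]]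
  by (simp add: sgn_act_zero)

lemma coef_comp: assumes it: "index_tree n T" and vp: "VP n T (\<sigma>, \<tau>)" and y: "y \<in> F (leaves T)"
  shows "coef phi (tgt T \<sigma>) \<tau> (coef phi T \<sigma> y) = sgn_act (E2 T (\<sigma>,\<tau>)) (phi (leaves T) (leaves (tgt2 T (\<sigma>,\<tau>))) y)"
proof -
  have v1: "valid n T \<sigma>" and v2: "valid n (tgt T \<sigma>) \<tau>" using vp by (auto simp: VP_def)
  have it1: "index_tree n (tgt T \<sigma>)" using valid_tgt1[OF it v1] .
  have it2: "index_tree n (tgt (tgt T \<sigma>) \<tau>)" using valid_tgt1[OF it1 v2] .
  note sp0 = sp_leaves[OF it] and sp1 = sp_leaves[OF it1] and sp2 = sp_leaves[OF it2]
  note r1 = valid_tgt3[OF it v1] and r2 = valid_tgt3[OF it1 v2]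
  have p1: "phi (leaves T) (leaves (tgt T \<sigma>)) y \<in> F (leaves (tgt T \<sigma>))" using phi_in[OF sp0 sp1 r1 y] .
  have "coef phi (tgt T \<sigma>) \<tau> (coef phi T \<sigma> y)
     = sgn_act (eps (tgt T \<sigma>) \<tau>) (sgn_act (eps T \<sigma>) (phi (leaves (tgt T \<sigma>)) (leaves (tgt (tgt T \<sigma>) \<tau>))
         (phi (leaves T) (leaves (tgt T \<sigma>)) y)))"
    unfolding coef_def using phi_sgn[OF sp1 sp2 r2 p1] by simp
  also have "\<dots> = sgn_act (E2 T (\<sigma>,\<tau>)) (phi (leaves T) (leaves (tgt2 T (\<sigma>,\<tau>))) y)"
    using phi_comp[OF sp0 sp1 sp2 r1 r2 y] by (simp add: sgn_act_sgn E2_def tgt2_def)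
  finally show ?thesis .
qed

lemma sum_in_F: assumes "set_partition n A" "\<And>i. i \<in> I \<Longrightarrow> f i \<in> F A" shows "sum f I \<in> F A"
proof (cases "finite I")
  case True then show ?thesis using assms
    by (induction I rule: finite_induct) (auto intro: F0 Fadd)
next
  case False then show ?thesis using F0[OF assms(1)] by simp
qed

lemma sum_push:
  assumes sp: "set_partition n A" and g0: "g 0 = 0"
    and gadd: "\<And>y z. y \<in> F A \<Longrightarrow> z \<in> F A \<Longrightarrow> g (y + z) = g y + g z"
    and f: "\<And>i. i \<in> I \<Longrightarrow> f i \<in> F A"
  shows "g (sum f I) = (\<Sum>i\<in>I. g (f i))"
proof (cases "finite I")
  case True then show ?thesis using f
  proof (induction I rule: finite_induct)
    case empty then show ?case using g0 by simp
  next
    case (insert a I)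
    have "sum f I \<in> F A" using sum_in_F[OF sp, of I f] insert by blast
    then show ?case using insert gadd[of "f a" "sum f I"] by simp
  qed
next
  case False then show ?thesis using g0 by simp
qed

end



lemma trees_finite: "finite (trees n k)"
proof -
  have "trees n k \<subseteq> Pow (Pow {1..n})" by (auto simp: trees_def index_tree_def)
  then show ?thesis by (meson finite_Pow_iff finite_atLeastAtMost finite_subset)
qed

lemma trees_it: "T \<in> trees n k \<Longrightarrow> index_tree n T" by (simp add: trees_def)

lemma steps_split: "steps n T = Pair True ` (nonleaves T - {{1..n}}) \<union> Pair False ` {S. exceptional T S}"
proof (rule set_eqI)
  fix \<sigma> :: "bool \<times> nat set"
  obtain b S where "\<sigma> = (b,S)" by force
  then show "\<sigma> \<in> steps n T \<longleftrightarrow> \<sigma> \<in> Pair True ` (nonleaves T - {{1..n}}) \<union> Pair False ` {S. exceptional T S}"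
    by (cases b) (auto simp: steps_def valid_def)
qed

lemma dmap_alt:
  assumes SS: "strict_system_alg n F phi" and xin: "\<forall>T\<in>trees n k. x T \<in> F (leaves T)"
  shows "dmap phi n k x T' = (if T' \<in> trees n (k-1) then
     (\<Sum>T\<in>trees n k. \<Sum>\<sigma>\<in>steps n T. if tgt T \<sigma> = T' then coef phi T \<sigma> (x T) else 0) else 0)"
proof (cases "T' \<in> trees n (k-1)")
  case False then show ?thesis by (simp add: dmap_def)
next
  case True
  have eq: "(\<Sum>S\<in>nonleaves T - {{1..n}}. if contrO T S = T' then sgn_act (sexp T S) (x T) else 0)
     + (\<Sum>S\<in>{S. exceptional T S}. if contrE T S = T' then - sgn_act (sexp T S) (phi (leaves T) (leaves (contrE T S)) (x T)) else 0)
     = (\<Sum>\<sigma>\<in>steps n T. if tgt T \<sigma> = T' then coef phi T \<sigma> (x T) else 0)" if T: "T \<in> trees n k" for T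
  proof -
    have it: "index_tree n T" using T by (simp add: trees_def)
    have xT: "x T \<in> F (leaves T)" using xin T by blast
    define g where "g \<sigma> = (if tgt T \<sigma> = T' then coef phi T \<sigma> (x T) else 0)" for \<sigma>
    have fA: "finite (nonleaves T - {{1..n}})" using nonleaves_finite[OF it] by simp
    have fB: "finite {S. exceptional T S}"
      using nonleaves_finite[OF it] by (rule finite_subset[rotated]) (auto simp: exceptional_def)
    have "(\<Sum>\<sigma>\<in>steps n T. g \<sigma>) = (\<Sum>\<sigma>\<in>Pair True ` (nonleaves T - {{1..n}}). g \<sigma>) + (\<Sum>\<sigma>\<in>Pair False ` {S. exceptional T S}. g \<sigma>)"
      unfolding steps_split by (rule sum.union_disjoint) (use fA fB in auto)
    also have "\<dots> = (\<Sum>S\<in>nonleaves T - {{1..n}}. g (True, S)) + (\<Sum>S\<in>{S. exceptional T S}. g (False, S))"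
      by (simp add: sum.reindex inj_on_def)
    also have "(\<Sum>S\<in>nonleaves T - {{1..n}}. g (True, S)) = (\<Sum>S\<in>nonleaves T - {{1..n}}. if contrO T S = T' then sgn_act (sexp T S) (x T) else 0)"
    proof (rule sum.cong)
      fix S assume S: "S \<in> nonleaves T - {{1..n}}"
      then have v: "valid n T (True, S)" by (simp add: valid_def)
      have "coef phi T (True, S) (x T) = sgn_act (sexp T S) (x T)"
        unfolding coef_def O_leaves_tgt[OF v] using phi_id[OF SS sp_leaves[OF SS it] xT] by (simp add: eps_def)
      then show "g (True, S) = (if contrO T S = T' then sgn_act (sexp T S) (x T) else 0)"
        by (simp add: g_def tgt_def)
    qed simp
    also have "(\<Sum>S\<in>{S. exceptional T S}. g (False, S)) = (\<Sum>S\<in>{S. exceptional T S}. if contrE T S = T' then - sgn_act (sexp T S) (phi (leaves T) (leaves (contrE T S)) (x T)) else 0)"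
      by (rule sum.cong) (auto simp: g_def tgt_def coef_def eps_def sgn_act_def)
    finally show ?thesis by (simp add: g_def)
  qed
  have "dmap phi n k x T' = (\<Sum>T\<in>trees n k. (\<Sum>S\<in>nonleaves T - {{1..n}}. if contrO T S = T' then sgn_act (sexp T S) (x T) else 0)
     + (\<Sum>S\<in>{S. exceptional T S}. if contrE T S = T' then - sgn_act (sexp T S) (phi (leaves T) (leaves (contrE T S)) (x T)) else 0))"
    unfolding dmap_def using True by (simp only: if_True sum.distrib)
  also have "\<dots> = (\<Sum>T\<in>trees n k. \<Sum>\<sigma>\<in>steps n T. if tgt T \<sigma> = T' then coef phi T \<sigma> (x T) else 0)"
    by (rule sum.cong[OF refl eq])
  finally show ?thesis using True by simp
qed



lemma sum_swap4:
  "(\<Sum>a\<in>A. \<Sum>b\<in>B a. \<Sum>c\<in>C. \<Sum>d\<in>D c. h a b c d) = (\<Sum>c\<in>C. \<Sum>d\<in>D c. \<Sum>a\<in>A. \<Sum>b\<in>B a. h a b c d)"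
proof -
  have "(\<Sum>a\<in>A. \<Sum>b\<in>B a. \<Sum>c\<in>C. \<Sum>d\<in>D c. h a b c d) = (\<Sum>a\<in>A. \<Sum>c\<in>C. \<Sum>b\<in>B a. \<Sum>d\<in>D c. h a b c d)"
    by (rule sum.cong[OF refl], rule sum.swap)
  also have "\<dots> = (\<Sum>a\<in>A. \<Sum>c\<in>C. \<Sum>d\<in>D c. \<Sum>b\<in>B a. h a b c d)"
    by (rule sum.cong[OF refl], rule sum.cong[OF refl], rule sum.swap)
  also have "\<dots> = (\<Sum>c\<in>C. \<Sum>a\<in>A. \<Sum>d\<in>D c. \<Sum>b\<in>B a. h a b c d)"
    by (rule sum.swap)
  also have "\<dots> = (\<Sum>c\<in>C. \<Sum>d\<in>D c. \<Sum>a\<in>A. \<Sum>b\<in>B a. h a b c d)"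
    by (rule sum.cong[OF refl], rule sum.swap)
  finally show ?thesis .
qed

theorem lemma6p8:
  fixes F :: "nat set set \<Rightarrow> 'a::ab_group_add set"
    and phi :: "nat set set \<Rightarrow> nat set set \<Rightarrow> 'a \<Rightarrow> 'a"
    and n :: nat and k :: int
  assumes "strict_system_alg n F phi"
    and "in_G F n k x"
  shows "dmap phi n (k - 1) (dmap phi n k x) = (\<lambda>_. 0)"
proof (rule ext)
  fix T''
  note SS = assms(1)
  define y where "y = dmap phi n k x"
  have xin: "\<forall>T\<in>trees n k. x T \<in> F (leaves T)" using assms(2) by (simp add: in_G_def)
  have yalt: "y T1 = (if T1 \<in> trees n (k-1) then
     (\<Sum>T\<in>trees n k. \<Sum>\<sigma>\<in>steps n T. if tgt T \<sigma> = T1 then coef phi T \<sigma> (x T) else 0) else 0)" for T1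
    unfolding y_def by (rule dmap_alt[OF SS xin])
  have yin: "\<forall>T1\<in>trees n (k-1). y T1 \<in> F (leaves T1)"
  proof
    fix T1 assume T1: "T1 \<in> trees n (k-1)"
    have sp1: "set_partition n (leaves T1)" using sp_leaves[OF SS trees_it[OF T1]] .
    show "y T1 \<in> F (leaves T1)"
      unfolding yalt using T1 apply simp
    proof (intro sum_in_F[OF SS sp1])
      fix T \<sigma> assume T: "T \<in> trees n k" and \<sigma>: "\<sigma> \<in> steps n T"
      have "coef phi T \<sigma> (x T) \<in> F (leaves (tgt T \<sigma>))"
        using coef_in[OF SS trees_it[OF T]] \<sigma> xin T by (simp add: steps_def)
      then show "(if tgt T \<sigma> = T1 then coef phi T \<sigma> (x T) else 0) \<in> F (leaves T1)"
        using F0[OF SS sp1] by auto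
    qed
  qed
  have dd: "dmap phi n (k-1) y T'' = (if T'' \<in> trees n (k-1-1) then
     (\<Sum>T1\<in>trees n (k-1). \<Sum>\<tau>\<in>steps n T1. if tgt T1 \<tau> = T'' then coef phi T1 \<tau> (y T1) else 0) else 0)"
    by (rule dmap_alt[OF SS yin])
  define Q where "Q T \<sigma> T1 \<tau> = (if tgt T1 \<tau> = T'' \<and> tgt T \<sigma> = T1 then coef phi T1 \<tau> (coef phi T \<sigma> (x T)) else 0)"
    for T \<sigma> T1 \<tau>
  define R where "R T \<sigma> \<tau> = (if tgt (tgt T \<sigma>) \<tau> = T'' then coef phi (tgt T \<sigma>) \<tau> (coef phi T \<sigma> (x T)) else 0)"
    for T \<sigma> \<tau>
  have step1: "(if tgt T1 \<tau> = T'' then coef phi T1 \<tau> (y T1) else 0) = (\<Sum>T\<in>trees n k. \<Sum>\<sigma>\<in>steps n T. Q T \<sigma> T1 \<tau>)"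
    if T1: "T1 \<in> trees n (k-1)" and \<tau>: "\<tau> \<in> steps n T1" for T1 \<tau>
  proof (cases "tgt T1 \<tau> = T''")
    case False then show ?thesis by (simp add: Q_def)
  next
    case True
    have it1: "index_tree n T1" using trees_it[OF T1] .
    have v: "valid n T1 \<tau>" using \<tau> by (simp add: steps_def)
    have sp1: "set_partition n (leaves T1)" using sp_leaves[OF SS it1] .
    define f where "f T \<sigma> = (if tgt T \<sigma> = T1 then coef phi T \<sigma> (x T) else 0)" for T \<sigma>
    have fin: "f T \<sigma> \<in> F (leaves T1)" if T: "T \<in> trees n k" and \<sigma>: "\<sigma> \<in> steps n T" for T \<sigma>
    proof -
      have "coef phi T \<sigma> (x T) \<in> F (leaves (tgt T \<sigma>))"
        using coef_in[OF SS trees_it[OF T]] \<sigma> xin T by (simp add: steps_def)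
      then show ?thesis using F0[OF SS sp1] by (auto simp: f_def)
    qed
    have g0: "coef phi T1 \<tau> 0 = 0" using coef_zero[OF SS it1 v] .
    have gadd: "\<And>a b. a \<in> F (leaves T1) \<Longrightarrow> b \<in> F (leaves T1) \<Longrightarrow> coef phi T1 \<tau> (a + b) = coef phi T1 \<tau> a + coef phi T1 \<tau> b"
      using coef_add[OF SS it1 v] by blast
    have "coef phi T1 \<tau> (y T1) = coef phi T1 \<tau> (\<Sum>T\<in>trees n k. \<Sum>\<sigma>\<in>steps n T. f T \<sigma>)"
      using T1 by (simp add: yalt f_def)
    also have "\<dots> = (\<Sum>T\<in>trees n k. coef phi T1 \<tau> (\<Sum>\<sigma>\<in>steps n T. f T \<sigma>))"
      by (rule sum_push[OF SS sp1, of "coef phi T1 \<tau>", OF g0 gadd]) (auto intro: sum_in_F[OF SS sp1] fin)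
    also have "\<dots> = (\<Sum>T\<in>trees n k. \<Sum>\<sigma>\<in>steps n T. coef phi T1 \<tau> (f T \<sigma>))"
      by (rule sum.cong[OF refl], rule sum_push[OF SS sp1, of "coef phi T1 \<tau>", OF g0 gadd]) (auto intro: fin)
    also have "\<dots> = (\<Sum>T\<in>trees n k. \<Sum>\<sigma>\<in>steps n T. Q T \<sigma> T1 \<tau>)"
      by (intro sum.cong refl) (simp add: f_def Q_def True g0)
    finally show ?thesis using True by simp
  qed
  have step3: "(\<Sum>T1\<in>trees n (k-1). \<Sum>\<tau>\<in>steps n T1. Q T \<sigma> T1 \<tau>) = (\<Sum>\<tau>\<in>steps n (tgt T \<sigma>). R T \<sigma> \<tau>)"
    if T: "T \<in> trees n k" and \<sigma>: "\<sigma> \<in> steps n T" for T \<sigma>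
  proof -
    have "tgt T \<sigma> \<in> trees n (k-1)" using tgt_trees[OF T] \<sigma> by (simp add: steps_def)
    have "(\<Sum>T1\<in>trees n (k-1). \<Sum>\<tau>\<in>steps n T1. Q T \<sigma> T1 \<tau>)
       = (\<Sum>T1\<in>trees n (k-1). if tgt T \<sigma> = T1 then (\<Sum>\<tau>\<in>steps n T1. if tgt T1 \<tau> = T'' then coef phi T1 \<tau> (coef phi T \<sigma> (x T)) else 0) else 0)"
      by (rule sum.cong[OF refl]) (auto simp: Q_def)
    also have "\<dots> = (\<Sum>\<tau>\<in>steps n (tgt T \<sigma>). R T \<sigma> \<tau>)"
      using \<open>tgt T \<sigma> \<in> trees n (k-1)\<close> trees_finite by (simp add: R_def)
    finally show ?thesis .
  qed
  have step4: "(\<Sum>\<sigma>\<in>steps n T. \<Sum>\<tau>\<in>steps n (tgt T \<sigma>). R T \<sigma> \<tau>) = 0" if T: "T \<in> trees n k" for T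
  proof -
    have it: "index_tree n T" using trees_it[OF T] .
    have xT: "x T \<in> F (leaves T)" using xin T by blast
    have fin1: "finite (steps n T)" using steps_finite[OF it] .
    have fin2: "\<forall>\<sigma>\<in>steps n T. finite (steps n (tgt T \<sigma>))"
      using steps_finite valid_tgt1[OF it] by (auto simp: steps_def)
    have SG: "(SIGMA \<sigma>:steps n T. steps n (tgt T \<sigma>)) = {p. VP n T p}"
      by (auto simp: steps_def VP_def)
    have "(\<Sum>\<sigma>\<in>steps n T. \<Sum>\<tau>\<in>steps n (tgt T \<sigma>). R T \<sigma> \<tau>) = (\<Sum>p\<in>{p. VP n T p}. case_prod (R T) p)"
      using sum.Sigma[OF fin1 fin2, of "R T"] SG by simp
    also have "\<dots> = 0"
    proof (rule sum_invol_0[where h = iv])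
      show "finite {p. VP n T p}" using SG fin1 fin2 by (metis finite_SigmaI)
    next
      fix p assume p: "p \<in> {p. VP n T p}"
      then have vp: "VP n T p" by simp
      note I = invol[OF it vp]
      show "iv p \<in> {p. VP n T p}" "iv (iv p) = p" "iv p \<noteq> p" using I by auto
      have Rp: "case_prod (R T) q = (if tgt2 T q = T'' then sgn_act (E2 T q) (phi (leaves T) (leaves (tgt2 T q)) (x T)) else 0)"
        if "VP n T q" for q
      proof -
        obtain \<sigma> \<tau> where q: "q = (\<sigma>, \<tau>)" by (cases q) blast
        show ?thesis using coef_comp[OF SS it _ xT, of \<sigma> \<tau>] that q by (simp add: R_def tgt2_def)
      qed
      show "case_prod (R T) (iv p) + case_prod (R T) p = 0"
        using Rp[OF vp] Rp[of "iv p"] I sgn_act_odd by auto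
    qed
    finally show ?thesis .
  qed
  show "dmap phi n (k - 1) (dmap phi n k x) T'' = 0"
  proof (cases "T'' \<in> trees n (k-1-1)")
    case False then show ?thesis using dd y_def by simp
  next
    case True
    have "dmap phi n (k-1) y T'' = (\<Sum>T1\<in>trees n (k-1). \<Sum>\<tau>\<in>steps n T1. \<Sum>T\<in>trees n k. \<Sum>\<sigma>\<in>steps n T. Q T \<sigma> T1 \<tau>)"
      using True dd step1 by (simp cong: sum.cong)
    also have "\<dots> = (\<Sum>T\<in>trees n k. \<Sum>\<sigma>\<in>steps n T. \<Sum>T1\<in>trees n (k-1). \<Sum>\<tau>\<in>steps n T1. Q T \<sigma> T1 \<tau>)"
      by (rule sum_swap4)
    also have "\<dots> = (\<Sum>T\<in>trees n k. \<Sum>\<sigma>\<in>steps n T. \<Sum>\<tau>\<in>steps n (tgt T \<sigma>). R T \<sigma> \<tau>)"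
      using step3 by (simp cong: sum.cong)
    also have "\<dots> = 0" using step4 by simp
    finally show ?thesis using y_def by simp
  qed
qed

end
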